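(* Assume (A1)–(A3) below. For any $\omega\in\Delta^{L-1}$ and any two positive definite matrices $W_1,W_2$ with $\lambda(W_1)=\lambda(W_2)=\omega$, $$V(W_1;\Omega_\omega)=V(W_2;\Omega_\omega)=\omega'D^{-1}\Omega_\omega D^{-1}\omega,$$ where $D=\mathrm{diag}(\gamma_1,\dots,\gamma_L)$ and $\Omega_\omega=\Omega(\beta^*(\omega))$.
   Context: Observe i.i.d. $(Y_i,D_i,\mathbf Z_i)$ with $Y_i\in\mathbb R$, $D_i\in\{0,1\}$, $\mathbf Z_i=(Z_{1i},\dots,Z_{Li})'\in\{0,1\}^L$, $L\ge2$; potential outcomes $Y_i(0),Y_i(1)$, compliance type $D_i(\cdot):\{0,1\}^L\to\{0,1\}$, $D_i=D_i(\mathbf Z_i)$, $Y_i=D_iY_i(1)+(1-D_i)Y_i(0)$. $p_\ell=P(Z_{\ell i}=1)$, $\pi_\ell,\rho_\ell$ the differences of $\mathbb E[D_i\mid Z_{\ell i}=z]$, $\mathbb E[Y_i\mid Z_{\ell i}=z]$ between $z=1$ and $0$, $\mathrm{Wald}_\ell=\rho_\ell/\pi_\ell$, $\gamma_\ell=\mathrm{Cov}(D_i,Z_{\ell i})$, $\boldsymbol\gamma=(\gamma_\ell)_\ell$, $\Sigma_Z=\mathrm{Var}(\mathbf Z_i)$. $g_i(\beta)$ is the vector with entries $(Y_i-\beta D_i)(Z_{\ell i}-p_\ell)$, $\Omega(\beta)=\mathbb E[g_i(\beta)g_i(\beta)']$. $\lambda_\ell(W)=\gamma_\ell[W\boldsymbol\gamma]_\ell/(\boldsymbol\gamma'W\boldsymbol\gamma)$;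 $\Delta^{L-1}$ is the probability simplex in $\mathbb R^L$; $\beta^*(\omega)=\sum_\ell\omega_\ell\mathrm{Wald}_\ell$. The sandwich variance is $V(W;\Omega)=\boldsymbol\gamma'W\Omega W\boldsymbol\gamma/(\boldsymbol\gamma'W\boldsymbol\gamma)^2$. Assumptions: (A1) $(Y_i(0),Y_i(1),D_i(\cdot))$ independent of $\mathbf Z_i$. (A2) $D_i(z)$ nondecreasing in each coordinate for every $i$. (A3) $p_\ell>0$, $\pi_\ell>0$ for all $\ell$; $\Sigma_Z$ positive definite. *)

theory Defs
  imports "HOL-Probability.Probability"
begin

text \<open>Population quantities for one draw (Y,D,Z) of the i.i.d. sample, on a probability
space M. Instruments are indexed by a finite type 'L (L = CARD('L)).\<close>

definition cmean :: "'a measure \<Rightarrow> ('a \<Rightarrow> real) \<Rightarrow> 'a set \<Rightarrow> real" where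
  "cmean M X A = (\<integral>x. X x * indicator A x \<partial>M) / measure M A"

definition pZ :: "'a measure \<Rightarrow> ('a \<Rightarrow> 'L \<Rightarrow> bool) \<Rightarrow> 'L \<Rightarrow> real" where
  "pZ M Z l = measure M {x \<in> space M. Z x l}"

definition piZ :: "'a measure \<Rightarrow> ('a \<Rightarrow> real) \<Rightarrow> ('a \<Rightarrow> 'L \<Rightarrow> bool) \<Rightarrow> 'L \<Rightarrow> real" where
  "piZ M X Z l = cmean M X {x \<in> space M. Z x l} - cmean M X {x \<in> space M. \<not> Z x l}"

definition wald :: "'a measure \<Rightarrow> ('a \<Rightarrow> real) \<Rightarrow> ('a \<Rightarrow> real) \<Rightarrow> ('a \<Rightarrow> 'L \<Rightarrow> bool) \<Rightarrow> 'L \<Rightarrow> real" where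
  "wald M Y D Z l = piZ M Y Z l / piZ M D Z l"

definition betastar :: "'a measure \<Rightarrow> ('a \<Rightarrow> real) \<Rightarrow> ('a \<Rightarrow> real) \<Rightarrow> ('a \<Rightarrow> 'L::finite \<Rightarrow> bool)
    \<Rightarrow> real^'L \<Rightarrow> real" where
  "betastar M Y D Z w = (\<Sum>l\<in>UNIV. w $ l * wald M Y D Z l)"

definition gammaZ :: "'a measure \<Rightarrow> ('a \<Rightarrow> real) \<Rightarrow> ('a \<Rightarrow> 'L::finite \<Rightarrow> bool) \<Rightarrow> real^'L" where
  "gammaZ M D Z = (\<chi> l. (\<integral>x. D x * of_bool (Z x l) \<partial>M) - (\<integral>x. D x \<partial>M) * pZ M Z l)"

definition SigmaZ :: "'a measure \<Rightarrow> ('a \<Rightarrow> 'L::finite \<Rightarrow> bool) \<Rightarrow> real^'L^'L" where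
  "SigmaZ M Z = (\<chi> l k. (\<integral>x. of_bool (Z x l) * of_bool (Z x k) \<partial>M) - pZ M Z l * pZ M Z k)"

definition gmom :: "'a measure \<Rightarrow> ('a \<Rightarrow> real) \<Rightarrow> ('a \<Rightarrow> real) \<Rightarrow> ('a \<Rightarrow> 'L::finite \<Rightarrow> bool)
    \<Rightarrow> real \<Rightarrow> 'a \<Rightarrow> real^'L" where
  "gmom M Y D Z b x = (\<chi> l. (Y x - b * D x) * (of_bool (Z x l) - pZ M Z l))"

definition OmegaM :: "'a measure \<Rightarrow> ('a \<Rightarrow> real) \<Rightarrow> ('a \<Rightarrow> real) \<Rightarrow> ('a \<Rightarrow> 'L::finite \<Rightarrow> bool)
    \<Rightarrow> real \<Rightarrow> real^'L^'L" where
  "OmegaM M Y D Z b = (\<chi> l k. \<integral>x. gmom M Y D Z b x $ l * gmom M Y D Z b x $ k \<partial>M)"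

definition pos_def_mat :: "real^'n^'n \<Rightarrow> bool" where
  "pos_def_mat A \<longleftrightarrow> transpose A = A \<and> (\<forall>x. x \<noteq> 0 \<longrightarrow> x \<bullet> (A *v x) > 0)"

definition lambdaW :: "real^'L \<Rightarrow> real^'L^'L \<Rightarrow> real^'L" where
  "lambdaW g W = (\<chi> l. g $ l * (W *v g) $ l / (g \<bullet> (W *v g)))"

definition sandwichV :: "real^'L \<Rightarrow> real^'L^'L \<Rightarrow> real^'L^'L \<Rightarrow> real" where
  "sandwichV g W Om = (g \<bullet> ((W ** Om ** W) *v g)) / (g \<bullet> (W *v g))\<^sup>2"

definition prob_simplex :: "(real^'L::finite) set" where
  "prob_simplex = {w. (\<forall>l. w $ l \<ge> 0) \<and> (\<Sum>l\<in>UNIV. w $ l) = 1}"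

definition diag_mat :: "real^'L \<Rightarrow> real^'L^'L" where
  "diag_mat g = (\<chi> i j. if i = j then g $ i else 0)"

end

theory Submission
  imports Defs
begin



lemma diag_inv:
  fixes g :: "real^'L::finite"
  assumes "\<And>l. g $ l \<noteq> 0"
  shows "matrix_inv (diag_mat g) = diag_mat (\<chi> l. 1 / g $ l)"
proof -
  let ?A = "diag_mat g" and ?B = "diag_mat (\<chi> l. 1 / g $ l)"
  have AB: "?A ** ?B = mat 1" and BA: "?B ** ?A = mat 1"
    using assms by (auto simp: diag_mat_def matrix_matrix_mult_def mat_def vec_eq_iff
        if_distrib[of "\<lambda>x. x * _"] cong: if_cong)
  have ex: "\<exists>A'. ?A ** A' = mat 1 \<and> A' ** ?A = mat 1" using AB BA by blast
  obtain C where C: "?A ** C = mat 1" "C ** ?A = mat 1" "C = matrix_inv ?A"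
    using someI_ex[OF ex] unfolding matrix_inv_def by blast
  have "C = C ** (?A ** ?B)" using AB by simp
  also have "\<dots> = ?B" by (simp add: matrix_mul_assoc C(2))
  finally show ?thesis using C(3) by simp
qed

lemma key:
  fixes g w :: "real^'L::finite" and W Om :: "real^'L^'L"
  assumes W: "pos_def_mat W" and g0: "\<And>l. g $ l \<noteq> 0"
    and lam: "lambdaW g W = w" and w0: "w \<noteq> 0"
  shows "sandwichV g W Om = w \<bullet> ((matrix_inv (diag_mat g) ** Om ** matrix_inv (diag_mat g)) *v w)"
proof -
  define c where "c = g \<bullet> (W *v g)"
  have gnz: "g \<noteq> 0" using g0 by (metis zero_index)
  have cpos: "c > 0" using W gnz unfolding pos_def_mat_def c_def by blast
  define u where "u = (\<chi> l. w $ l / g $ l)"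
  have Wg: "W *v g = c *\<^sub>R u"
  proof -
    have "\<And>l. g $ l * (W *v g) $ l / c = w $ l"
      using lam unfolding lambdaW_def c_def by (auto simp: vec_eq_iff)
    then show ?thesis using cpos g0 unfolding u_def
      by (auto simp: vec_eq_iff field_simps)
  qed
  have Wt: "transpose W = W" using W unfolding pos_def_mat_def by blast
  have "g \<bullet> ((W ** Om ** W) *v g) = g \<bullet> (W *v (Om *v (W *v g)))"
    by (simp add: matrix_vector_mul_assoc matrix_mul_assoc)
  also have "\<dots> = (W *v g) \<bullet> (Om *v (W *v g))"
    by (metis dot_lmul_matrix transpose_matrix_vector Wt inner_commute)
  also have "\<dots> = c^2 * (u \<bullet> (Om *v u))"
    by (simp add: Wg matrix_vector_mult_scaleR power2_eq_square)
  finally have L: "sandwichV g W Om = u \<bullet> (Om *v u)"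
    unfolding sandwichV_def c_def[symmetric] using cpos by simp
  have Dinv: "matrix_inv (diag_mat g) *v w = u"
    unfolding diag_inv[OF g0] u_def
    by (auto simp: vec_eq_iff diag_mat_def matrix_vector_mult_def if_distrib[of "\<lambda>x. x * _"] cong: if_cong)
  have Ds: "transpose (matrix_inv (diag_mat g)) = matrix_inv (diag_mat g)"
    unfolding diag_inv[OF g0] by (auto simp: diag_mat_def transpose_def vec_eq_iff)
  have "w \<bullet> ((matrix_inv (diag_mat g) ** Om ** matrix_inv (diag_mat g)) *v w)
     = w \<bullet> (matrix_inv (diag_mat g) *v (Om *v u))"
    by (simp add: matrix_vector_mul_assoc[symmetric] Dinv)
  also have "\<dots> = u \<bullet> (Om *v u)"
    by (metis dot_lmul_matrix transpose_matrix_vector Ds Dinv inner_commute)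
  finally show ?thesis using L by simp
qed


lemma gamma_pos:
  fixes M :: "'a measure" and Z :: "'a \<Rightarrow> 'L::finite \<Rightarrow> bool" and D :: "'a \<Rightarrow> real"
  assumes P: "prob_space M"
    and Dm: "D \<in> borel_measurable M" and Db: "\<And>x. D x = 0 \<or> D x = 1"
    and Zm: "Z \<in> M \<rightarrow>\<^sub>M count_space UNIV"
    and A3p: "pZ M Z l > 0"
    and A3pi: "piZ M D Z l > 0"
    and A3S: "pos_def_mat (SigmaZ M Z)"
  shows "gammaZ M D Z $ l > 0"
proof -
  interpret prob_space M by fact
  define A where "A = {x \<in> space M. Z x l}"
  define B where "B = {x \<in> space M. \<not> Z x l}"
  have Am: "A \<in> sets M"
  proof -
    have "A = Z -` {f. f l} \<inter> space M" unfolding A_def by auto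
    then show ?thesis using measurable_sets[OF Zm, of "{f. f l}"] by simp
  qed
  have BA: "B = space M - A" unfolding A_def B_def by auto
  have Bm: "B \<in> sets M" using Am BA by auto
  define p where "p = prob A"
  have pdef: "pZ M Z l = p" unfolding pZ_def p_def A_def ..
  have pB: "prob B = 1 - p" unfolding BA p_def using Am prob_compl by blast
  have ind: "(\<lambda>x. of_bool (Z x l) :: real) \<in> borel_measurable M"
  proof -
    have "(\<lambda>x. indicator A x :: real) \<in> borel_measurable M" using Am by simp
    moreover have "\<And>x. x \<in> space M \<Longrightarrow> indicator A x = (of_bool (Z x l)::real)"
      unfolding A_def by (auto simp: indicator_def)
    ultimately show ?thesis by (subst measurable_cong[where g="indicator A"]) auto
  qed
  have intZ: "(\<integral>x. of_bool (Z x l) * (of_bool (Z x l)::real) \<partial>M) = p"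
  proof -
    have "(\<integral>x. of_bool (Z x l) * (of_bool (Z x l)::real) \<partial>M) = (\<integral>x. indicator A x \<partial>M)"
      by (rule Bochner_Integration.integral_cong[OF refl]) (auto simp: A_def indicator_def)
    also have "\<dots> = p" unfolding p_def using Am by simp
    finally show ?thesis .
  qed
  have "SigmaZ M Z $ l $ l > 0"
  proof -
    have "axis l (1::real) \<noteq> 0" by (simp add: axis_eq_0_iff)
    then have "axis l 1 \<bullet> (SigmaZ M Z *v axis l 1) > 0"
      using A3S unfolding pos_def_mat_def by blast
    then show ?thesis
      by (simp add: matrix_vector_mult_def inner_vec_def axis_def
          if_distrib[of "\<lambda>x. x * _"] if_distrib[of "\<lambda>x. _ * x"] cong: if_cong)
  qed
  then have "p - p * p > 0" unfolding SigmaZ_def using intZ pdef by simp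
  then have p1: "p < 1" and p0: "p > 0" using A3p pdef by (auto simp: mult_less_cancel_left1)
  have Dint: "integrable M D"
    by (rule integrable_const_bound[where B=1, OF _ Dm]) (rule AE_I2, metis Db real_norm_def abs_zero abs_one order_refl zero_le_one)
  have Dint2: "integrable M (\<lambda>x. D x * indicator S x)" if "S \<in> sets M" for S
    using Dint that by (simp add: integrable_real_mult_indicator)
  define a where "a = (\<integral>x. D x * indicator A x \<partial>M)"
  define b where "b = (\<integral>x. D x * indicator B x \<partial>M)"
  have sumD: "(\<integral>x. D x \<partial>M) = a + b"
  proof -
    have "(\<integral>x. D x \<partial>M) = (\<integral>x. D x * indicator A x + D x * indicator B x \<partial>M)"
      by (rule Bochner_Integration.integral_cong[OF refl]) (auto simp: A_def B_def indicator_def)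
    also have "\<dots> = a + b" unfolding a_def b_def
      by (rule Bochner_Integration.integral_add[OF Dint2[OF Am] Dint2[OF Bm]])
    finally show ?thesis .
  qed
  have aZ: "(\<integral>x. D x * of_bool (Z x l) \<partial>M) = a" unfolding a_def
    by (rule Bochner_Integration.integral_cong[OF refl]) (auto simp: A_def indicator_def)
  have pi: "piZ M D Z l = a / p - b / (1 - p)"
  proof -
    have "piZ M D Z l = a / prob A - b / prob B"
      by (simp add: piZ_def cmean_def a_def b_def A_def B_def)
    then show ?thesis using pB p_def by simp
  qed
  have g: "gammaZ M D Z $ l = a - (a + b) * p"
    unfolding gammaZ_def using aZ sumD pdef by simp
  have "a - (a + b) * p = p * (1 - p) * (a / p - b / (1 - p))"
    using p0 p1 by (simp add: field_simps)
  then show ?thesis using g pi A3pi p0 p1 by simp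
qed
theorem proposition7:
  fixes M :: "'a measure"
    and Y0 Y1 :: "'a \<Rightarrow> real"
    and Dc :: "'a \<Rightarrow> ('L::finite \<Rightarrow> bool) \<Rightarrow> bool"
    and Z :: "'a \<Rightarrow> 'L \<Rightarrow> bool"
    and Y D :: "'a \<Rightarrow> real"
    and w :: "real^'L"
    and W1 W2 :: "real^'L^'L"
  assumes "prob_space M"
    and "CARD('L) \<ge> 2"
    and D_def: "\<And>x. D x = of_bool (Dc x (Z x))"
    and Y_def: "\<And>x. Y x = D x * Y1 x + (1 - D x) * Y0 x"
    and meas_U: "(\<lambda>x. (Y0 x, Y1 x, Dc x)) \<in> M \<rightarrow>\<^sub>M (borel \<Otimes>\<^sub>M borel \<Otimes>\<^sub>M count_space UNIV)"
    and meas_Z: "Z \<in> M \<rightarrow>\<^sub>M count_space UNIV"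
    and A1: "\<And>A B. A \<in> sets (borel \<Otimes>\<^sub>M borel \<Otimes>\<^sub>M count_space UNIV) \<Longrightarrow>
               measure M {x \<in> space M. (Y0 x, Y1 x, Dc x) \<in> A \<and> Z x \<in> B}
               = measure M {x \<in> space M. (Y0 x, Y1 x, Dc x) \<in> A} * measure M {x \<in> space M. Z x \<in> B}"
    and A2: "\<And>x z z'. (\<forall>l. z l \<longrightarrow> z' l) \<Longrightarrow> Dc x z \<Longrightarrow> Dc x z'"
    and A3p: "\<And>l. pZ M Z l > 0"
    and A3pi: "\<And>l. piZ M D Z l > 0"
    and A3S: "pos_def_mat (SigmaZ M Z)"
    and w_simplex: "w \<in> prob_simplex"
    and W1: "pos_def_mat W1" and W2: "pos_def_mat W2"
    and lam1: "lambdaW (gammaZ M D Z) W1 = w"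
    and lam2: "lambdaW (gammaZ M D Z) W2 = w"
  shows "sandwichV (gammaZ M D Z) W1 (OmegaM M Y D Z (betastar M Y D Z w))
           = sandwichV (gammaZ M D Z) W2 (OmegaM M Y D Z (betastar M Y D Z w))
       \<and> sandwichV (gammaZ M D Z) W2 (OmegaM M Y D Z (betastar M Y D Z w))
           = w \<bullet> ((matrix_inv (diag_mat (gammaZ M D Z)) ** OmegaM M Y D Z (betastar M Y D Z w)
                     ** matrix_inv (diag_mat (gammaZ M D Z))) *v w)"
proof -
  interpret prob_space M by fact
  have Dcm: "Dc \<in> M \<rightarrow>\<^sub>M count_space UNIV"
    using measurable_compose[OF measurable_compose[OF meas_U measurable_snd] measurable_snd] by simp
  have Dm: "D \<in> borel_measurable M"
  proof -
    have "(\<lambda>x. (\<lambda>z x. of_bool (Dc x z) :: real) (Z x) x) \<in> borel_measurable M"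
    proof (rule measurable_compose_countable'[OF _ meas_Z])
      fix z :: "'L \<Rightarrow> bool"
      show "(\<lambda>x. of_bool (Dc x z) :: real) \<in> borel_measurable M"
        using measurable_compose[OF Dcm, of "\<lambda>f. of_bool (f z) :: real" borel] by simp
    qed simp
    moreover have "D = (\<lambda>x. of_bool (Dc x (Z x)))" using D_def by auto
    ultimately show ?thesis by simp
  qed
  have Db: "\<And>x. D x = 0 \<or> D x = 1" using D_def by simp
  have gpos: "\<And>l. gammaZ M D Z $ l \<noteq> 0"
    using gamma_pos[OF \<open>prob_space M\<close> Dm Db meas_Z A3p A3pi A3S] by (metis less_irrefl)
  have w0: "w \<noteq> 0" using w_simplex unfolding prob_simplex_def by auto
  show ?thesis using key[OF W1 gpos lam1 w0] key[OF W2 gpos lam2 w0] by simp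
qed

end
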